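(* Let $\mathcal{B}\subset\mathcal{B}(G)$ be a von Neumann algebra and $\vartheta$ a faithful strongly continuous $E_0$-semigroup on $\mathcal{B}$, with product system $E^\odot$ and intertwiner system $E'^\odot$. Let $(H,\rho,(w_t))$ be a strongly continuous right dilation of $E^\odot$, with $\eta_t$, $\vartheta^w$, $E'$, a unit vector $\xi'\in E'$, $H_t$ and $F'^\odot$ as described in the context. Then for each $t\ge0$ there is a unique unitary $\Upsilon_t:G\to H_t$ with $\Upsilon_t(xg)=\eta_t(x)\xi'g$ for all $x\in E_t=\mathcal{B}$, $g\in G$; the map $\nu_t:E'_t\to F'_t$, $\nu_t(x')=\Upsilon_tx'$, is a surjective, inner-product-preserving, $\mathcal{B}'$-bilinear map (with respect to the left actions of $\mathcal{B}'$ on $E'_t$ by operator multiplication and on $F'_t$ by $b'.y'=\vartheta^w_t(\xi'b'\xi'^* )y'$); and the $\nu_t$ form an isomorphism of product systems: $\nu_{s+t}(x'_s\hat x'_t)=\vartheta^w_t\big((\nu_sx'_s)\xi'^*\big)(\nu_t\hat x'_t)$ for all $s,t\ge0$, $x'_s\in E'_s$, $\hat x'_t\in E'_t$.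
   Context: An $E_0$-semigroup $\vartheta$ on $\mathcal{B}$: normal unital $*$-endomorphisms $\vartheta_t$, $\vartheta_0=\mathrm{id}$, $\vartheta_{s+t}=\vartheta_s\vartheta_t$; faithful: each $\vartheta_t$ injective; strongly continuous: $t\mapsto\vartheta_t(b)$ strongly continuous. Product system $E^\odot$ of $\vartheta$: $E_t:=\mathcal{B}$ with right action by operator multiplication, inner product $x^*y$, left action $b.x=\vartheta_t(b)x$, product $(x_s,y_t)\mapsto\vartheta_t(x_s)y_t$; a section $(x_t)$ is strongly continuous if $t\mapsto x_t\in\mathcal{B}(G)$ is strongly continuous. Intertwiner system $E'^\odot$: $E'_t:=\{x'\in\mathcal{B}(G):\vartheta_t(b)x'=x'b\ \forall b\in\mathcal{B}\}$, $\mathcal{B}'$-bimodule by operator multiplication, inner product $x'^*y'$, product $(x'_s,\hat x'_t)\mapsto x'_s\hat x'_t\in E'_{s+t}$. Strongly continuous right dilation: Hilbert space $H$, faithful normal unital representation $\rho$ of $\mathcal{B}$ on $H$, unitaries $w_t:E_t\odot H\to H$ (with $E_t\odot H$ the completion of $E_t\otimes H$ under $\langle x\otimes h,y\otimes k\rangle=\langle h,\rho(x^*y)k\rangle$) satisfying $w_t(\vartheta_t(b)x\odot h)=\rho(b)w_t(x\odot h)$, $w_0(b\odot h)=\rho(b)h$, $w_{s+t}(\vartheta_t(x_s)y_t\odot h)=w_s(x_s\odot w_t(y_t\odot h))$, and $t\mapsto w_t(x_t\odot h)$ continuous for every strongly continuous section $(x_t)$ and $h\in H$. Define $\eta_t(x)h:=w_t(x\odot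 h)$, and $\vartheta^w_t(a):=w_t(\mathrm{id}\odot a)w_t^*$ for $a\in\rho(\mathcal{B})'$. Let $E':=\{x'\in\mathcal{B}(G,H):\rho(b)x'=x'b\ \forall b\in\mathcal{B}\}$ and let $\xi'\in E'$ with $\xi'^*\xi'=1$. Put $H_t:=\vartheta^w_t(\xi'\xi'^* )H$. The strongly continuous commutant $F'^\odot$: $F'_t:=\vartheta^w_t(\xi'\xi'^* )E'\subset\mathcal{B}(G,H_t)$, a $\mathcal{B}'$-correspondence with right action by operator multiplication, inner product $x'^*y'$, left action $b'.x'=\vartheta^w_t(\xi'b'\xi'^* )x'$, and product $(x'_s,y'_t)\mapsto\vartheta^w_t(x'_s\xi'^* )y'_t\in F'_{s+t}$; its strongly continuous sections are those with $t\mapsto x'_t\in\mathcal{B}(G,H)$ strongly continuous. *)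

theory Defs
  imports "HOL-Analysis.Analysis"
begin

class chilbert = real_normed_vector + complete_space +
  fixes scaleC :: "complex \<Rightarrow> 'a \<Rightarrow> 'a"
    and cinner :: "'a \<Rightarrow> 'a \<Rightarrow> complex"
  assumes scaleC_add_right: "scaleC c (x + y) = scaleC c x + scaleC c y"
    and scaleC_add_left: "scaleC (c + d) x = scaleC c x + scaleC d x"
    and scaleC_scaleC: "scaleC c (scaleC d x) = scaleC (c * d) x"
    and scaleC_one: "scaleC 1 x = x"
    and scaleR_scaleC: "scaleR r x = scaleC (complex_of_real r) x"
    and cinner_commute: "cinner x y = cnj (cinner y x)"
    and cinner_add_right: "cinner x (y + z) = cinner x y + cinner x z"
    and cinner_scaleC_right: "cinner x (scaleC c y) = c * cinner x y"
    and norm_cinner: "complex_of_real ((norm x)\<^sup>2) = cinner x x"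

definition clinear :: "('a::chilbert \<Rightarrow> 'b::chilbert) \<Rightarrow> bool" where
  "clinear f \<longleftrightarrow> (\<forall>x y. f (x + y) = f x + f y) \<and> (\<forall>c x. f (scaleC c x) = scaleC c (f x))"

definition bop :: "('a::chilbert \<Rightarrow> 'b::chilbert) \<Rightarrow> bool" where
  "bop f \<longleftrightarrow> clinear f \<and> (\<exists>K. \<forall>x. norm (f x) \<le> K * norm x)"

definition adj :: "('a::chilbert \<Rightarrow> 'b::chilbert) \<Rightarrow> ('b \<Rightarrow> 'a)" where
  "adj f = (THE g. \<forall>x y. cinner (f x) y = cinner x (g y))"

definition op_add :: "('a::chilbert \<Rightarrow> 'b::chilbert) \<Rightarrow> ('a \<Rightarrow> 'b) \<Rightarrow> ('a \<Rightarrow> 'b)" where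
  "op_add a b = (\<lambda>x. a x + b x)"

definition op_scale :: "complex \<Rightarrow> ('a::chilbert \<Rightarrow> 'b::chilbert) \<Rightarrow> ('a \<Rightarrow> 'b)" where
  "op_scale c a = (\<lambda>x. scaleC c (a x))"

definition selfadj :: "('a::chilbert \<Rightarrow> 'a) \<Rightarrow> bool" where
  "selfadj a \<longleftrightarrow> bop a \<and> adj a = a"

definition op_le :: "('a::chilbert \<Rightarrow> 'a) \<Rightarrow> ('a \<Rightarrow> 'a) \<Rightarrow> bool" where
  "op_le a b \<longleftrightarrow> (\<forall>x. Re (cinner x (a x)) \<le> Re (cinner x (b x)))"

definition is_op_sup :: "('a::chilbert \<Rightarrow> 'a) \<Rightarrow> ('a \<Rightarrow> 'a) set \<Rightarrow> bool" where
  "is_op_sup s D \<longleftrightarrow> selfadj s \<and> (\<forall>a\<in>D. op_le a s)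
     \<and> (\<forall>u. selfadj u \<and> (\<forall>a\<in>D. op_le a u) \<longrightarrow> op_le s u)"

definition commutant :: "('a::chilbert \<Rightarrow> 'a) set \<Rightarrow> ('a \<Rightarrow> 'a) set" where
  "commutant S = {a. bop a \<and> (\<forall>b\<in>S. a \<circ> b = b \<circ> a)}"

definition von_neumann_algebra :: "('a::chilbert \<Rightarrow> 'a) set \<Rightarrow> bool" where
  "von_neumann_algebra A \<longleftrightarrow> (\<forall>a\<in>A. bop a) \<and> (\<forall>a\<in>A. adj a \<in> A)
     \<and> commutant (commutant A) = A"

definition star_hom :: "('a::chilbert \<Rightarrow> 'a) set \<Rightarrow> (('a \<Rightarrow> 'a) \<Rightarrow> ('b::chilbert \<Rightarrow> 'b)) \<Rightarrow> bool" where
  "star_hom A \<Phi> \<longleftrightarrow> (\<forall>a\<in>A. bop (\<Phi> a))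
     \<and> (\<forall>a\<in>A. \<forall>b\<in>A. \<Phi> (op_add a b) = op_add (\<Phi> a) (\<Phi> b))
     \<and> (\<forall>c. \<forall>a\<in>A. \<Phi> (op_scale c a) = op_scale c (\<Phi> a))
     \<and> (\<forall>a\<in>A. \<forall>b\<in>A. \<Phi> (a \<circ> b) = \<Phi> a \<circ> \<Phi> b)
     \<and> (\<forall>a\<in>A. \<Phi> (adj a) = adj (\<Phi> a))"

text \<open>normal: preserves least upper bounds of bounded increasing nets (as directed sets)
of self-adjoint elements\<close>
definition normal_on :: "('a::chilbert \<Rightarrow> 'a) set \<Rightarrow> (('a \<Rightarrow> 'a) \<Rightarrow> ('b::chilbert \<Rightarrow> 'b)) \<Rightarrow> bool" where
  "normal_on A \<Phi> \<longleftrightarrow> (\<forall>D s. D \<subseteq> A \<and> D \<noteq> {} \<and> (\<forall>a\<in>D. selfadj a)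
       \<and> (\<forall>a\<in>D. \<forall>b\<in>D. \<exists>c\<in>D. op_le a c \<and> op_le b c)
       \<and> s \<in> A \<and> is_op_sup s D \<longrightarrow> is_op_sup (\<Phi> s) (\<Phi> ` D))"

definition cspanC :: "'a::chilbert set \<Rightarrow> 'a set" where
  "cspanC S = {(\<Sum>i\<in>I. scaleC (c i) (v i)) | (I :: nat set) c v. finite I \<and> v ` I \<subseteq> S}"

definition unitary_onto :: "('a::chilbert \<Rightarrow> 'b::chilbert) \<Rightarrow> 'b set \<Rightarrow> bool" where
  "unitary_onto U S \<longleftrightarrow> bop U \<and> adj U \<circ> U = id \<and> range U = S"

definition E0_semigroup :: "('g::chilbert \<Rightarrow> 'g) set \<Rightarrow> (real \<Rightarrow> ('g \<Rightarrow> 'g) \<Rightarrow> ('g \<Rightarrow> 'g)) \<Rightarrow> bool" where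
  "E0_semigroup B \<theta> \<longleftrightarrow>
     (\<forall>t\<ge>0. \<theta> t ` B \<subseteq> B \<and> star_hom B (\<theta> t) \<and> \<theta> t id = id \<and> normal_on B (\<theta> t))
     \<and> (\<forall>b\<in>B. \<theta> 0 b = b)
     \<and> (\<forall>s\<ge>0. \<forall>t\<ge>0. \<forall>b\<in>B. \<theta> (s + t) b = \<theta> s (\<theta> t b))"

definition faithful_semigroup :: "('g::chilbert \<Rightarrow> 'g) set \<Rightarrow> (real \<Rightarrow> ('g \<Rightarrow> 'g) \<Rightarrow> ('g \<Rightarrow> 'g)) \<Rightarrow> bool" where
  "faithful_semigroup B \<theta> \<longleftrightarrow> (\<forall>t\<ge>0. inj_on (\<theta> t) B)"

definition strongly_continuous_semigroup :: "('g::chilbert \<Rightarrow> 'g) set \<Rightarrow> (real \<Rightarrow> ('g \<Rightarrow> 'g) \<Rightarrow> ('g \<Rightarrow> 'g)) \<Rightarrow> bool" where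
  "strongly_continuous_semigroup B \<theta> \<longleftrightarrow> (\<forall>b\<in>B. \<forall>g. continuous_on {0..} (\<lambda>t. \<theta> t b g))"

text \<open>strongly continuous sections of the product system E (E_t = B)\<close>
definition sc_section :: "('g::chilbert \<Rightarrow> 'g) set \<Rightarrow> (real \<Rightarrow> ('g \<Rightarrow> 'g)) \<Rightarrow> bool" where
  "sc_section B x \<longleftrightarrow> (\<forall>t\<ge>0. x t \<in> B) \<and> (\<forall>g. continuous_on {0..} (\<lambda>t. x t g))"

definition intertwiners :: "('g::chilbert \<Rightarrow> 'g) set \<Rightarrow> (real \<Rightarrow> ('g \<Rightarrow> 'g) \<Rightarrow> ('g \<Rightarrow> 'g)) \<Rightarrow> real \<Rightarrow> ('g \<Rightarrow> 'g) set" where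
  "intertwiners B \<theta> t = {x'. bop x' \<and> (\<forall>b\<in>B. \<theta> t b \<circ> x' = x' \<circ> b)}"

text \<open>A strongly continuous right dilation (H, rho, w) of the product system of theta,
described through eta_t(x)h = w_t(x \<odot> h): w_t is a unitary E_t \<odot> H \<rightarrow> H iff
eta_t preserves the inner product of elementary tensors and the elementary tensors'
images span a dense subspace.\<close>
definition right_dilation ::
  "('g::chilbert \<Rightarrow> 'g) set \<Rightarrow> (real \<Rightarrow> ('g \<Rightarrow> 'g) \<Rightarrow> ('g \<Rightarrow> 'g))
   \<Rightarrow> (('g \<Rightarrow> 'g) \<Rightarrow> ('h::chilbert \<Rightarrow> 'h)) \<Rightarrow> (real \<Rightarrow> ('g \<Rightarrow> 'g) \<Rightarrow> ('h \<Rightarrow> 'h)) \<Rightarrow> bool" where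
  "right_dilation B \<theta> \<rho> \<eta> \<longleftrightarrow>
     star_hom B \<rho> \<and> \<rho> id = id \<and> inj_on \<rho> B \<and> normal_on B \<rho>
   \<and> (\<forall>t\<ge>0. \<forall>x\<in>B. \<forall>y\<in>B. \<forall>h k. cinner (\<eta> t x h) (\<eta> t y k) = cinner h (\<rho> (adj x \<circ> y) k))
   \<and> (\<forall>t\<ge>0. closure (cspanC {\<eta> t x h | x h. x \<in> B}) = UNIV)
   \<and> (\<forall>t\<ge>0. \<forall>b\<in>B. \<forall>x\<in>B. \<forall>h. \<eta> t (\<theta> t b \<circ> x) h = \<rho> b (\<eta> t x h))
   \<and> (\<forall>b\<in>B. \<forall>h. \<eta> 0 b h = \<rho> b h)
   \<and> (\<forall>s\<ge>0. \<forall>t\<ge>0. \<forall>x\<in>B. \<forall>y\<in>B. \<forall>h. \<eta> (s + t) (\<theta> t x \<circ> y) h = \<eta> s x (\<eta> t y h))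
   \<and> (\<forall>x. sc_section B x \<longrightarrow> (\<forall>h. continuous_on {0..} (\<lambda>t. \<eta> t (x t) h)))"

text \<open>theta^w_t(a) = w_t (id \<odot> a) w_t^*, for a in rho(B)': the bounded operator
with theta^w_t(a) (eta_t(x) h) = eta_t(x) (a h).\<close>
definition thetaw :: "('g::chilbert \<Rightarrow> 'g) set \<Rightarrow> (real \<Rightarrow> ('g \<Rightarrow> 'g) \<Rightarrow> ('h::chilbert \<Rightarrow> 'h))
   \<Rightarrow> real \<Rightarrow> ('h \<Rightarrow> 'h) \<Rightarrow> ('h \<Rightarrow> 'h)" where
  "thetaw B \<eta> t a = (THE c. bop c \<and> (\<forall>x\<in>B. \<forall>h. c (\<eta> t x h) = \<eta> t x (a h)))"

definition Eprime :: "('g::chilbert \<Rightarrow> 'g) set \<Rightarrow> (('g \<Rightarrow> 'g) \<Rightarrow> ('h::chilbert \<Rightarrow> 'h)) \<Rightarrow> ('g \<Rightarrow> 'h) set" where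
  "Eprime B \<rho> = {x'. bop x' \<and> (\<forall>b\<in>B. \<rho> b \<circ> x' = x' \<circ> b)}"

definition Fprime :: "('g::chilbert \<Rightarrow> 'g) set \<Rightarrow> (('g \<Rightarrow> 'g) \<Rightarrow> ('h::chilbert \<Rightarrow> 'h))
   \<Rightarrow> (real \<Rightarrow> ('g \<Rightarrow> 'g) \<Rightarrow> ('h \<Rightarrow> 'h)) \<Rightarrow> ('g \<Rightarrow> 'h) \<Rightarrow> real \<Rightarrow> ('g \<Rightarrow> 'h) set" where
  "Fprime B \<rho> \<eta> \<xi> t = {thetaw B \<eta> t (\<xi> \<circ> adj \<xi>) \<circ> x' | x'. x' \<in> Eprime B \<rho>}"

definition Hsub :: "('g::chilbert \<Rightarrow> 'g) set \<Rightarrow> (real \<Rightarrow> ('g \<Rightarrow> 'g) \<Rightarrow> ('h::chilbert \<Rightarrow> 'h))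
   \<Rightarrow> ('g \<Rightarrow> 'h) \<Rightarrow> real \<Rightarrow> 'h set" where
  "Hsub B \<eta> \<xi> t = range (thetaw B \<eta> t (\<xi> \<circ> adj \<xi>))"

end

theory Submission
  imports Defs
begin


lemma cinner_add_left: "cinner (x + y) (z::'a::chilbert) = cinner x z + cinner y z"
  by (metis cinner_commute cinner_add_right complex_cnj_add)

lemma cinner_scaleC_left: "cinner (scaleC c x) (y::'a::chilbert) = cnj c * cinner x y"
  by (metis cinner_commute cinner_scaleC_right complex_cnj_mult complex_cnj_cnj)

lemma cinner_zero_right[simp]: "cinner (x::'a::chilbert) 0 = 0"
  using cinner_add_right[of x 0 0] by simp

lemma cinner_zero_left[simp]: "cinner 0 (x::'a::chilbert) = 0"
  using cinner_add_left[of 0 0 x] by simp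

lemma scaleC_real: "scaleC (complex_of_real r) (x::'a::chilbert) = scaleR r x"
  by (simp add: scaleR_scaleC)

lemma minus_scaleC: "- (x::'a::chilbert) = scaleC (-1) x"
  using scaleR_scaleC[of "-1" x] by simp

lemma cinner_minus_right: "cinner (x::'a::chilbert) (- y) = - cinner x y"
  by (simp add: minus_scaleC cinner_scaleC_right)

lemma cinner_minus_left: "cinner (- x) (y::'a::chilbert) = - cinner x y"
  by (simp add: minus_scaleC cinner_scaleC_left)

lemma cinner_diff_right: "cinner (x::'a::chilbert) (y - z) = cinner x y - cinner x z"
  by (metis diff_conv_add_uminus cinner_add_right cinner_minus_right)

lemma cinner_diff_left: "cinner (x - y) (z::'a::chilbert) = cinner x z - cinner y z"
  by (metis diff_conv_add_uminus cinner_add_left cinner_minus_left)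

lemma cinner_self: "cinner (x::'a::chilbert) x = complex_of_real ((norm x)\<^sup>2)"
  by (metis norm_cinner)

lemma cinner_self_eq_0: "cinner (x::'a::chilbert) x = 0 \<longleftrightarrow> x = 0"
  by (simp add: cinner_self)

lemma cinner_ext: "(\<And>z. cinner z x = cinner z (y::'a::chilbert)) \<Longrightarrow> x = y"
proof -
  assume h: "\<And>z. cinner z x = cinner z y"
  have "cinner (x - y) (x - y) = 0" by (simp add: cinner_diff_right h)
  thus ?thesis by (simp add: cinner_self_eq_0)
qed

lemma scaleC_zero_right[simp]: "scaleC c (0::'a::chilbert) = 0"
  using scaleC_add_right[of c 0 0] by simp

lemma scaleC_zero_left[simp]: "scaleC 0 (x::'a::chilbert) = 0"
  using scaleC_real[of 0 x] by simp

lemma norm_scaleC: "norm (scaleC c (x::'a::chilbert)) = cmod c * norm x"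
proof -
  have e1: "cinner (scaleC c x) (scaleC c x) = (c * cnj c) * cinner x x"
    by (simp add: cinner_scaleC_left cinner_scaleC_right mult_ac)
  hence "complex_of_real ((norm (scaleC c x))\<^sup>2) = complex_of_real ((cmod c)\<^sup>2) * complex_of_real ((norm x)\<^sup>2)"
    by (simp only: cinner_self complex_norm_square[symmetric])
  hence "(norm (scaleC c x))\<^sup>2 = (cmod c)\<^sup>2 * (norm x)\<^sup>2"
    by (metis of_real_eq_iff of_real_mult)
  hence "(norm (scaleC c x))\<^sup>2 = (cmod c * norm x)\<^sup>2" by (simp add: power_mult_distrib)
  thus ?thesis by (simp add: power2_eq_iff_nonneg)
qed

lemma cinner_self_Re: "Re (cinner (x::'a::chilbert) x) = (norm x)\<^sup>2"
  by (simp add: cinner_self)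

lemma Re_cinner_le: "Re (cinner (x::'a::chilbert) y) \<le> norm x * norm y"
proof (cases "norm x * norm y = 0")
  case True
  then have "x = 0 \<or> y = 0" by simp
  then show ?thesis by auto
next
  case False
  then have nx: "norm x > 0" and ny: "norm y > 0" by auto
  define a where "a = norm y" define b where "b = norm x"
  have "0 \<le> Re (cinner (scaleR a x - scaleR b y) (scaleR a x - scaleR b y))"
    by (simp add: cinner_self)
  also have "\<dots> = a*a * Re (cinner x x) - 2*a*b * Re (cinner x y) + b*b * Re (cinner y y)"
  proof -
    have c: "Re (cinner y x) = Re (cinner x y)" by (subst cinner_commute) simp
    show ?thesis
      by (simp add: cinner_diff_left cinner_diff_right scaleC_real[symmetric]
          cinner_scaleC_left cinner_scaleC_right c algebra_simps)
  qed
  also have "\<dots> = 2*a*b*(a*b) - 2*a*b * Re (cinner x y)"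
    by (simp add: cinner_self_Re a_def b_def power2_eq_square algebra_simps)
  finally have "2*a*b * Re (cinner x y) \<le> 2*a*b*(a*b)" by simp
  moreover have "2*a*b > 0" using nx ny a_def b_def by simp
  ultimately have "Re (cinner x y) \<le> a*b" by (rule mult_left_le_imp_le)
  thus ?thesis by (simp add: a_def b_def mult.commute)
qed

lemma cinner_CS: "cmod (cinner (x::'a::chilbert) y) \<le> norm x * norm y"
proof -
  define w where "w = cinner x y"
  have "cinner x (scaleC (cnj w) y) = complex_of_real ((cmod w)\<^sup>2)"
    using complex_norm_square[of w] by (simp add: cinner_scaleC_right w_def mult.commute)
  hence "(cmod w)\<^sup>2 \<le> norm x * norm (scaleC (cnj w) y)"
    using Re_cinner_le[of x "scaleC (cnj w) y"] by simp
  hence "(cmod w)\<^sup>2 \<le> cmod w * (norm x * norm y)"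
    by (simp add: norm_scaleC algebra_simps)
  thus ?thesis unfolding w_def[symmetric]
    by (metis (no_types) mult_le_cancel_left_pos norm_ge_zero order_le_less power2_eq_square
        mult_nonneg_nonneg)
qed


lemma parallelogram:
  "(norm (u + v))\<^sup>2 + (norm (u - v))\<^sup>2 = 2 * (norm (u::'a::chilbert))\<^sup>2 + 2 * (norm v)\<^sup>2"
proof -
  have "cinner (u+v) (u+v) + cinner (u-v) (u-v) = 2 * cinner u u + 2 * cinner v v"
    by (simp add: cinner_add_left cinner_add_right cinner_diff_left cinner_diff_right)
  hence "complex_of_real ((norm (u + v))\<^sup>2 + (norm (u - v))\<^sup>2)
       = complex_of_real (2 * (norm u)\<^sup>2 + 2 * (norm v)\<^sup>2)"
    by (simp add: cinner_self)
  thus ?thesis using of_real_eq_iff by blast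
qed

lemma bop_bounded_linear: "bop f \<Longrightarrow> bounded_linear f"
proof -
  assume "bop f"
  then obtain K where cl: "clinear f" and K: "\<And>x. norm (f x) \<le> K * norm x"
    unfolding bop_def by auto
  show ?thesis
  proof (rule bounded_linear_intro[where K=K])
    show "\<And>x y. f (x + y) = f x + f y" using cl unfolding clinear_def by auto
    show "\<And>r x. f (scaleR r x) = scaleR r (f x)"
      using cl unfolding clinear_def by (simp add: scaleC_real[symmetric])
    show "\<And>x. norm (f x) \<le> norm x * K" using K by (simp add: mult.commute)
  qed
qed

lemma bop_add: "bop f \<Longrightarrow> f (x + y) = f x + f y"
  unfolding bop_def clinear_def by auto

lemma bop_scaleC: "bop f \<Longrightarrow> f (scaleC c x) = scaleC c (f x)"
  unfolding bop_def clinear_def by auto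

lemma bop_neg: "bop f \<Longrightarrow> f (- y) = - f y"
  by (simp add: minus_scaleC bop_scaleC)

lemma bop_diff: "bop f \<Longrightarrow> f (x - y) = f x - f y"
  by (metis diff_conv_add_uminus bop_add bop_neg)

lemma bop_zero: "bop f \<Longrightarrow> f 0 = 0"
  using bop_add[of f 0 0] by simp

lemma bop_cont: "bop f \<Longrightarrow> continuous_on S f"
  by (rule linear_continuous_on[OF bop_bounded_linear])

lemma bop_bound_nonneg: "bop f \<Longrightarrow> \<exists>K\<ge>0. \<forall>x. norm (f x) \<le> K * norm x"
proof -
  assume "bop f"
  then obtain K where K: "\<And>x. norm (f x) \<le> K * norm x" unfolding bop_def by auto
  have "\<forall>x. norm (f x) \<le> max K 0 * norm x"
  proof
    fix x
    have "norm (f x) \<le> K * norm x" by (rule K)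
    also have "\<dots> \<le> max K 0 * norm x" by (simp add: mult_right_mono)
    finally show "norm (f x) \<le> max K 0 * norm x" .
  qed
  thus ?thesis by (intro exI[of _ "max K 0"]) simp
qed

lemma bop_id: "bop id"
  unfolding bop_def clinear_def by (auto intro: exI[of _ 1])

lemma bop_comp: "bop f \<Longrightarrow> bop g \<Longrightarrow> bop (f \<circ> g)"
proof -
  assume f: "bop f" and g: "bop g"
  obtain Kf where Kf: "Kf \<ge> 0" "\<And>x. norm (f x) \<le> Kf * norm x" using bop_bound_nonneg[OF f] by auto
  obtain Kg where Kg: "\<And>x. norm (g x) \<le> Kg * norm x" using g unfolding bop_def by auto
  have "\<And>x. norm (f (g x)) \<le> (Kf * Kg) * norm x"
  proof -
    fix x
    have "norm (f (g x)) \<le> Kf * norm (g x)" by (rule Kf(2))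
    also have "\<dots> \<le> Kf * (Kg * norm x)" using Kg Kf(1) by (simp add: mult_left_mono)
    finally show "norm (f (g x)) \<le> (Kf * Kg) * norm x" by (simp add: mult.assoc)
  qed
  moreover have "clinear (f \<circ> g)" using f g unfolding bop_def clinear_def by simp
  ultimately show ?thesis unfolding bop_def by auto
qed

lemma adj_unique:
  assumes "\<And>x y. cinner (f x) y = cinner x (g y)"
  shows "adj f = g"
  unfolding adj_def
proof (rule the_equality)
  show "\<forall>x y. cinner (f x) y = cinner x (g y)" using assms by auto
  fix h assume h: "\<forall>x y. cinner (f x) y = cinner x (h y)"
  show "h = g"
  proof
    fix y show "h y = g y" by (rule cinner_ext) (metis h assms)
  qed
qed



lemma riesz:
  fixes \<phi> :: "'a::chilbert \<Rightarrow> complex"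
  assumes add: "\<And>x y. \<phi> (x + y) = \<phi> x + \<phi> y"
    and sc: "\<And>c x. \<phi> (scaleC c x) = c * \<phi> x"
    and bd: "\<And>x. cmod (\<phi> x) \<le> K * norm x"
  shows "\<exists>z. \<forall>x. \<phi> x = cinner z x"
proof (cases "\<forall>x. \<phi> x = 0")
  case True then show ?thesis by (intro exI[of _ 0]) simp
next
  case False
  then obtain x0 where x0: "\<phi> x0 \<noteq> 0" by auto
  have blin: "bounded_linear \<phi>"
  proof (rule bounded_linear_intro[where K=K])
    show "\<And>x y. \<phi> (x + y) = \<phi> x + \<phi> y" by (rule add)
    show "\<And>r x. \<phi> (scaleR r x) = scaleR r (\<phi> x)"
      by (simp add: scaleC_real[symmetric] sc scaleR_conv_of_real)
    show "\<And>x. norm (\<phi> x) \<le> norm x * K" using bd by (simp add: mult.commute)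
  qed
  define A where "A = {x. \<phi> x = 1}"
  have Ane: "scaleC (1 / \<phi> x0) x0 \<in> A" using x0 by (simp add: A_def sc)
  define d where "d = Inf (norm ` A)"
  have bdd: "bdd_below (norm ` A)" by (rule bdd_belowI[of _ 0]) auto
  have d_le: "\<And>x. x \<in> A \<Longrightarrow> d \<le> norm x" unfolding d_def
    using bdd by (auto intro: cInf_lower)
  have d_ge: "0 \<le> d" unfolding d_def using Ane by (auto intro: cInf_greatest)
  have "\<forall>n::nat. \<exists>x. x \<in> A \<and> norm x < d + inverse (real (Suc n))"
  proof
    fix n :: nat
    have "Inf (norm ` A) < d + inverse (real (Suc n))" unfolding d_def by simp
    then obtain r where "r \<in> norm ` A" "r < d + inverse (real (Suc n))"
      using cInf_lessD[of "norm ` A"] Ane by blast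
    thus "\<exists>x. x \<in> A \<and> norm x < d + inverse (real (Suc n))" by auto
  qed
  hence "\<exists>X. \<forall>n. X n \<in> A \<and> norm (X n) < d + inverse (real (Suc n))" by (rule choice)
  then obtain X where XX: "\<forall>n. X n \<in> A \<and> norm (X n) < d + inverse (real (Suc n))" by blast
  have XA: "\<And>n. X n \<in> A" using XX by blast
  have Xn: "\<And>n. norm (X n) < d + inverse (real (Suc n))" using XX by blast
  have phi0: "\<phi> 0 = 0" using add[of 0 0] by simp
  have phid: "\<And>x y. \<phi> (x - y) = \<phi> x - \<phi> y"
  proof -
    fix x y
    have "\<phi> x = \<phi> (x - y) + \<phi> y" using add[of "x-y" y] by simp
    thus "\<phi> (x - y) = \<phi> x - \<phi> y" by simp
  qed
  have lin_sR: "\<And>r x. \<phi> (scaleR r x) = complex_of_real r * \<phi> x"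
    by (simp add: scaleC_real[symmetric] sc)
  have mid: "\<And>x y. x \<in> A \<Longrightarrow> y \<in> A \<Longrightarrow> 2 * d \<le> norm (x + y)"
  proof -
    fix x y assume "x \<in> A" "y \<in> A"
    hence "scaleR (1/2) (x + y) \<in> A"
      by (simp add: A_def lin_sR add)
    hence "d \<le> norm (scaleR (1/2) (x + y))" by (rule d_le)
    thus "2 * d \<le> norm (x + y)" by simp
  qed
  have cauchy: "Cauchy X"
  proof (rule CauchyI)
    fix e :: real assume e: "0 < e"
    have "0 < e\<^sup>2 / (8 * d + 4)" using e d_ge by simp
    then obtain N where N: "inverse (real (Suc N)) < e\<^sup>2 / (8 * d + 4)"
      using reals_Archimedean by blast
    show "\<exists>M. \<forall>m\<ge>M. \<forall>n\<ge>M. norm (X m - X n) < e"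
    proof (intro exI allI impI)
      fix m n assume mN: "N \<le> m" and nN: "N \<le> n"
      define em where "em = inverse (real (Suc m))"
      define en where "en = inverse (real (Suc n))"
      define eN where "eN = inverse (real (Suc N))"
      have em0: "0 \<le> em" by (simp add: em_def)
      have emN: "em \<le> eN" unfolding em_def eN_def by (rule le_imp_inverse_le) (use mN in auto)
      have em1: "em \<le> 1" by (simp add: em_def field_simps)
      have en0: "0 \<le> en" by (simp add: en_def)
      have enN: "en \<le> eN" unfolding en_def eN_def by (rule le_imp_inverse_le) (use nN in auto)
      have en1: "en \<le> 1" by (simp add: en_def field_simps)
      have "norm (X m) \<le> d + em" using Xn[of m] unfolding em_def by (rule less_imp_le)
      hence a: "(norm (X m))\<^sup>2 \<le> (d + em)\<^sup>2" by (rule power_mono) simp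
      have "norm (X n) \<le> d + en" using Xn[of n] unfolding en_def by (rule less_imp_le)
      hence b: "(norm (X n))\<^sup>2 \<le> (d + en)\<^sup>2" by (rule power_mono) simp
      have c: "(2 * d)\<^sup>2 \<le> (norm (X m + X n))\<^sup>2"
        by (rule power_mono[OF mid[OF XA XA]]) (use d_ge in simp)
      have m1: "(4 * d + 2 * em) * em \<le> (4 * d + 2) * eN"
        by (rule mult_mono) (use em0 emN em1 d_ge in auto)
      have m2: "(4 * d + 2 * en) * en \<le> (4 * d + 2) * eN"
        by (rule mult_mono) (use en0 enN en1 d_ge in auto)
      have pos: "0 < 8 * d + 4" using d_ge by simp
      have "(8 * d + 4) * eN < (8 * d + 4) * (e\<^sup>2 / (8 * d + 4))"
        unfolding eN_def by (rule mult_strict_left_mono[OF N pos])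
      hence m3: "(8 * d + 4) * eN < e\<^sup>2" using pos by simp
      have "(norm (X m - X n))\<^sup>2 = 2 * (norm (X m))\<^sup>2 + 2 * (norm (X n))\<^sup>2 - (norm (X m + X n))\<^sup>2"
        using parallelogram[of "X m" "X n"] by simp
      also have "\<dots> \<le> 2 * (d + em)\<^sup>2 + 2 * (d + en)\<^sup>2 - (2 * d)\<^sup>2" using a b c by simp
      also have "\<dots> = (4 * d + 2 * em) * em + (4 * d + 2 * en) * en"
        by (simp add: power2_eq_square algebra_simps)
      also have "\<dots> \<le> (4 * d + 2) * eN + (4 * d + 2) * eN"
        using m1 m2 by (rule add_mono)
      also have "\<dots> = (8 * d + 4) * eN" by (simp add: algebra_simps)
      also have "\<dots> < e\<^sup>2" by (rule m3)
      finally have "(norm (X m - X n))\<^sup>2 < e\<^sup>2" .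
      thus "norm (X m - X n) < e" by (rule power_less_imp_less_base) (use e in simp)
    qed
  qed
  then obtain z where lim: "X \<longlonglongrightarrow> z" using Cauchy_convergent_iff convergent_def by blast
  have "(\<lambda>n. \<phi> (X n)) \<longlonglongrightarrow> \<phi> z" using blin lim by (rule bounded_linear.tendsto)
  moreover have "(\<lambda>n. \<phi> (X n)) \<longlonglongrightarrow> 1" using XA by (simp add: A_def)
  ultimately have zA: "\<phi> z = 1" by (rule LIMSEQ_unique)
  have "norm z \<le> d"
  proof (rule LIMSEQ_le)
    show "(\<lambda>n. norm (X n)) \<longlonglongrightarrow> norm z" using lim by (rule tendsto_norm)
    show "(\<lambda>n. d + inverse (real (Suc n))) \<longlonglongrightarrow> d"
      using tendsto_add[OF tendsto_const LIMSEQ_inverse_real_of_nat, of d] by simp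
    show "\<exists>N. \<forall>n\<ge>N. norm (X n) \<le> d + inverse (real (Suc n))" using Xn less_imp_le by blast
  qed
  hence zmin: "\<And>x. x \<in> A \<Longrightarrow> norm z \<le> norm x" using d_le by fastforce
  have z0: "z \<noteq> 0" using zA phi0 by auto
  have orth: "\<And>n. \<phi> n = 0 \<Longrightarrow> cinner z n = 0"
  proof -
    fix n assume n0: "\<phi> n = 0"
    define a where "a = cinner z n"
    define q where "q = (cmod a)\<^sup>2"
    define t where "t = inverse ((norm n)\<^sup>2 + 1)"
    define c where "c = - (complex_of_real t * cnj a)"
    have np: "0 < (norm n)\<^sup>2 + 1" by (intro add_nonneg_pos) simp_all
    have t0: "0 < t" unfolding t_def using np by simp
    have "z + scaleC c n \<in> A" using zA n0 by (simp add: A_def add sc)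
    hence "norm z \<le> norm (z + scaleC c n)" by (rule zmin)
    hence le: "(norm z)\<^sup>2 \<le> (norm (z + scaleC c n))\<^sup>2" by (rule power_mono) simp
    have aa: "a * cnj a = complex_of_real q" unfolding q_def using complex_norm_square[of a] by simp
    have aa': "cnj a * a = complex_of_real q" using aa by (simp add: mult.commute)
    have na: "cinner n z = cnj a" unfolding a_def by (rule cinner_commute)
    have e1: "cinner (z + scaleC c n) (z + scaleC c n)
        = cinner z z + c * a + cnj c * cnj a + cnj c * (c * cinner n n)"
      unfolding a_def[symmetric]
      by (simp add: cinner_add_left cinner_add_right cinner_scaleC_left cinner_scaleC_right
          na a_def[symmetric] distrib_left add.assoc)
    have ca: "c * a = - complex_of_real (t * q)"
    proof -
      have "c * a = - (complex_of_real t * (cnj a * a))" unfolding c_def by (simp add: mult.assoc)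
      thus ?thesis using aa' by simp
    qed
    have cc: "cnj c * cnj a = - complex_of_real (t * q)"
    proof -
      have "cnj c * cnj a = - (complex_of_real t * (a * cnj a))" unfolding c_def by (simp add: mult.assoc)
      thus ?thesis using aa by simp
    qed
    have cmc: "cmod c = t * cmod a" unfolding c_def using t0 by (simp add: norm_mult)
    have "c * cnj c = complex_of_real ((cmod c)\<^sup>2)" using complex_norm_square[of c] by simp
    hence c2: "cnj c * c = complex_of_real (t * t * q)" unfolding cmc q_def
      by (simp add: mult.commute power_mult_distrib power2_eq_square)
    have "cinner (z + scaleC c n) (z + scaleC c n)
        = cinner z z + - complex_of_real (t * q) + - complex_of_real (t * q)
          + (cnj c * c) * cinner n n"
      by (simp only: e1 ca cc mult.assoc)
    also have "\<dots> = complex_of_real ((norm z)\<^sup>2) + - complex_of_real (t * q) + - complex_of_real (t * q)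
          + complex_of_real (t * t * q) * complex_of_real ((norm n)\<^sup>2)"
      by (simp only: c2 cinner_self)
    also have "\<dots> = complex_of_real ((norm z)\<^sup>2 - 2 * t * q + t * t * q * (norm n)\<^sup>2)"
      by simp
    finally have "complex_of_real ((norm (z + scaleC c n))\<^sup>2)
        = complex_of_real ((norm z)\<^sup>2 - 2 * t * q + t * t * q * (norm n)\<^sup>2)"
      by (simp only: cinner_self)
    hence eq: "(norm (z + scaleC c n))\<^sup>2 = (norm z)\<^sup>2 - 2 * t * q + t * t * q * (norm n)\<^sup>2"
      using of_real_eq_iff by blast
    have key: "0 \<le> (t * q) * (t * (norm n)\<^sup>2 - 2)"
    proof -
      have "(t * q) * (t * (norm n)\<^sup>2 - 2) = t * t * q * (norm n)\<^sup>2 - 2 * t * q"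
        by (simp add: algebra_simps)
      thus ?thesis using le eq by linarith
    qed
    have tn: "t * (norm n)\<^sup>2 < 1" unfolding t_def using np by (simp add: field_simps)
    have q0: "0 \<le> q" unfolding q_def by simp
    have "q = 0"
    proof (rule ccontr)
      assume "q \<noteq> 0"
      hence "0 < t * q" using q0 t0 by simp
      moreover have "t * (norm n)\<^sup>2 - 2 < 0" using tn by simp
      ultimately have "(t * q) * (t * (norm n)\<^sup>2 - 2) < 0" by (rule mult_pos_neg)
      thus False using key by simp
    qed
    thus "cinner z n = 0" unfolding q_def a_def by simp
  qed
  define w where "w = scaleC (complex_of_real (inverse ((norm z)\<^sup>2))) z"
  show ?thesis
  proof (intro exI allI)
    fix x
    have "\<phi> (x - scaleC (\<phi> x) z) = 0"
      using zA by (simp add: phid sc)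
    hence "cinner z (x - scaleC (\<phi> x) z) = 0" by (rule orth)
    hence "cinner z x = \<phi> x * complex_of_real ((norm z)\<^sup>2)"
      by (simp add: cinner_diff_right cinner_scaleC_right cinner_self)
    thus "\<phi> x = cinner w x" unfolding w_def using z0
      by (simp add: cinner_scaleC_left field_simps)
  qed
qed



lemma adj_exists:
  assumes f: "bop (f::'a::chilbert \<Rightarrow> 'b::chilbert)"
  shows "\<exists>g. \<forall>x y. cinner (f x) y = cinner x (g y)"
proof -
  obtain K where K0: "K \<ge> 0" and K: "\<And>x. norm (f x) \<le> K * norm x"
    using bop_bound_nonneg[OF f] by auto
  have "\<forall>y. \<exists>z. \<forall>x. cinner y (f x) = cinner z x"
  proof
    fix y
    show "\<exists>z. \<forall>x. cinner y (f x) = cinner z x"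
    proof (rule riesz[where K="norm y * K"])
      show "\<And>a b. cinner y (f (a + b)) = cinner y (f a) + cinner y (f b)"
        by (simp add: bop_add[OF f] cinner_add_right)
      show "\<And>c a. cinner y (f (scaleC c a)) = c * cinner y (f a)"
        by (simp add: bop_scaleC[OF f] cinner_scaleC_right)
      fix a
      have "cmod (cinner y (f a)) \<le> norm y * norm (f a)" by (rule cinner_CS)
      also have "\<dots> \<le> norm y * (K * norm a)" using K by (simp add: mult_left_mono)
      finally show "cmod (cinner y (f a)) \<le> norm y * K * norm a" by (simp add: mult.assoc)
    qed
  qed
  hence "\<exists>g. \<forall>y. \<forall>x. cinner y (f x) = cinner (g y) x" by (rule choice)
  then obtain g where g: "\<And>x y. cinner y (f x) = cinner (g y) x" by blast
  show ?thesis
  proof (intro exI allI)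
    fix x y
    show "cinner (f x) y = cinner x (g y)"
      by (metis g cinner_commute)
  qed
qed

lemma adj_prop: "bop f \<Longrightarrow> cinner (f x) y = cinner x (adj f y)"
proof -
  assume f: "bop f"
  then obtain g where g: "\<forall>x y. cinner (f x) y = cinner x (g y)" using adj_exists by blast
  hence "adj f = g" by (intro adj_unique) blast
  thus ?thesis using g by simp
qed

lemma adj_prop2: "bop f \<Longrightarrow> cinner y (f x) = cinner (adj f y) x"
  by (metis adj_prop cinner_commute)

lemma bop_adj: assumes f: "bop f" shows "bop (adj f)"
proof -
  obtain K where K0: "K \<ge> 0" and K: "\<And>x. norm (f x) \<le> K * norm x"
    using bop_bound_nonneg[OF f] by auto
  have cl: "clinear (adj f)" unfolding clinear_def
  proof (intro conjI allI)
    fix x y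
    show "adj f (x + y) = adj f x + adj f y"
      by (rule cinner_ext) (simp add: adj_prop[OF f, symmetric] cinner_add_right)
  next
    fix c x
    show "adj f (scaleC c x) = scaleC c (adj f x)"
      by (rule cinner_ext) (simp add: adj_prop[OF f, symmetric] cinner_scaleC_right)
  qed
  have "\<forall>y. norm (adj f y) \<le> K * norm y"
  proof
    fix y
    have "(norm (adj f y))\<^sup>2 = Re (cinner (adj f y) (adj f y))" by (simp add: cinner_self_Re)
    also have "\<dots> = Re (cinner (f (adj f y)) y)" by (simp add: adj_prop[OF f])
    also have "\<dots> \<le> norm (f (adj f y)) * norm y" by (rule Re_cinner_le)
    also have "\<dots> \<le> (K * norm (adj f y)) * norm y" using K by (simp add: mult_right_mono)
    finally have h: "norm (adj f y) * norm (adj f y) \<le> norm (adj f y) * (K * norm y)"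
      by (simp add: power2_eq_square mult_ac)
    show "norm (adj f y) \<le> K * norm y"
    proof (cases "norm (adj f y) = 0")
      case True thus ?thesis using K0 by simp
    next
      case False
      hence "0 < norm (adj f y)" by simp
      thus ?thesis using h by simp
    qed
  qed
  thus ?thesis using cl unfolding bop_def by blast
qed

lemma adj_comp: "bop f \<Longrightarrow> bop g \<Longrightarrow> adj (f \<circ> g) = adj g \<circ> adj f"
  by (rule adj_unique) (simp add: adj_prop)

lemma adj_adj: "bop f \<Longrightarrow> adj (adj f) = f"
  by (rule adj_unique) (simp add: adj_prop2)

lemma adj_id: "adj id = id"
  by (rule adj_unique) simp

lemma bop_sum: assumes f: "bop f" and I: "finite I"
  shows "f (\<Sum>i\<in>I. h i) = (\<Sum>i\<in>I. f (h i))"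
  using I
proof (induction I rule: finite_induct)
  case empty then show ?case by (simp add: bop_zero[OF f])
next
  case (insert i I) then show ?case by (simp add: bop_add[OF f])
qed

lemma bop_eq_dense:
  assumes c1: "bop c1" and c2: "bop c2" and dense: "closure (cspanC S) = UNIV"
    and agree: "\<And>v. v \<in> S \<Longrightarrow> c1 v = c2 v"
  shows "c1 = c2"
proof -
  have span: "cspanC S \<subseteq> {x. c1 x = c2 x}"
  proof
    fix w assume "w \<in> cspanC S"
    then obtain I :: "nat set" and c v where I: "finite I" "v ` I \<subseteq> S"
      and w: "w = (\<Sum>i\<in>I. scaleC (c i) (v i))" unfolding cspanC_def by blast
    have "c1 w = (\<Sum>i\<in>I. scaleC (c i) (c1 (v i)))"
      unfolding w by (simp add: bop_sum[OF c1 I(1)] bop_scaleC[OF c1])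
    also have "\<dots> = (\<Sum>i\<in>I. scaleC (c i) (c2 (v i)))"
      using I(2) agree by (intro sum.cong) auto
    also have "\<dots> = c2 w"
      unfolding w by (simp add: bop_sum[OF c2 I(1)] bop_scaleC[OF c2])
    finally show "w \<in> {x. c1 x = c2 x}" by simp
  qed
  have "closed {x. c1 x = c2 x}" by (rule closed_Collect_eq) (simp_all add: bop_cont c1 c2)
  hence "closure (cspanC S) \<subseteq> {x. c1 x = c2 x}" using span by (rule closure_minimal[rotated])
  thus ?thesis using dense by auto
qed

lemma thetaw_eq:
  assumes dense: "closure (cspanC {\<eta> t x h | x h. x \<in> B}) = UNIV"
    and c: "bop c" and cp: "\<And>x h. x \<in> B \<Longrightarrow> c (\<eta> t x h) = \<eta> t x (a h)"
  shows "thetaw B \<eta> t a = c"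
  unfolding thetaw_def
proof (rule the_equality)
  show "bop c \<and> (\<forall>x\<in>B. \<forall>h. c (\<eta> t x h) = \<eta> t x (a h))" using c cp by blast
  fix c' assume c': "bop c' \<and> (\<forall>x\<in>B. \<forall>h. c' (\<eta> t x h) = \<eta> t x (a h))"
  show "c' = c"
  proof (rule bop_eq_dense[OF _ c dense])
    show "bop c'" using c' by blast
    fix v assume "v \<in> {\<eta> t x h | x h. x \<in> B}"
    then obtain x h where "x \<in> B" "v = \<eta> t x h" by blast
    thus "c' v = c v" using c' cp by simp
  qed
qed


lemma iso_bop:
  fixes f :: "'a::chilbert \<Rightarrow> 'b::chilbert"
  assumes h: "\<And>x y. cinner (f x) (f y) = cinner x y"
  shows "bop f"
proof -
  have add: "f (x + y) = f x + f y" for x y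
  proof -
    define d where "d = f (x + y) - f x - f y"
    have o: "cinner (f u) d = 0" for u
      unfolding d_def by (simp add: cinner_diff_right h cinner_add_right)
    have "cinner d d = 0"
      by (subst (1) d_def) (simp add: cinner_diff_left o)
    hence "d = 0" by (simp add: cinner_self_eq_0)
    thus ?thesis unfolding d_def by (simp add: algebra_simps)
  qed
  have sc: "f (scaleC c x) = scaleC c (f x)" for c x
  proof -
    define d where "d = f (scaleC c x) - scaleC c (f x)"
    have o: "cinner (f u) d = 0" for u
      unfolding d_def by (simp add: cinner_diff_right h cinner_scaleC_right)
    have "cinner d d = 0"
      by (subst (1) d_def) (simp add: cinner_diff_left cinner_scaleC_left o)
    hence "d = 0" by (simp add: cinner_self_eq_0)
    thus ?thesis unfolding d_def by simp
  qed
  have nm: "norm (f x) \<le> 1 * norm x" for x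
  proof -
    have "complex_of_real ((norm (f x))\<^sup>2) = complex_of_real ((norm x)\<^sup>2)"
      by (simp only: cinner_self[symmetric] h)
    hence "(norm (f x))\<^sup>2 = (norm x)\<^sup>2" using of_real_eq_iff by blast
    thus ?thesis by (simp add: power2_eq_iff_nonneg)
  qed
  show ?thesis unfolding bop_def clinear_def using add sc nm by blast
qed



theorem proposition4p10:
  fixes B :: "('g::chilbert \<Rightarrow> 'g) set"
    and \<theta> :: "real \<Rightarrow> ('g \<Rightarrow> 'g) \<Rightarrow> ('g \<Rightarrow> 'g)"
    and \<rho> :: "('g \<Rightarrow> 'g) \<Rightarrow> ('h::chilbert \<Rightarrow> 'h)"
    and \<eta> :: "real \<Rightarrow> ('g \<Rightarrow> 'g) \<Rightarrow> ('h \<Rightarrow> 'h)"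
    and \<xi> :: "'g \<Rightarrow> 'h"
  assumes vN: "von_neumann_algebra B"
    and E0: "E0_semigroup B \<theta>"
    and faithful: "faithful_semigroup B \<theta>"
    and sc: "strongly_continuous_semigroup B \<theta>"
    and dil: "right_dilation B \<theta> \<rho> \<eta>"
    and xi_in: "\<xi> \<in> Eprime B \<rho>"
    and xi_unit: "adj \<xi> \<circ> \<xi> = id"
  shows "(\<forall>t\<ge>0. \<exists>!U. unitary_onto U (Hsub B \<eta> \<xi> t)
              \<and> (\<forall>x\<in>B. \<forall>g. U (x g) = \<eta> t x (\<xi> g)))
    \<and> (\<forall>\<Upsilon> :: real \<Rightarrow> 'g \<Rightarrow> 'h.
         (\<forall>t\<ge>0. unitary_onto (\<Upsilon> t) (Hsub B \<eta> \<xi> t)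
              \<and> (\<forall>x\<in>B. \<forall>g. \<Upsilon> t (x g) = \<eta> t x (\<xi> g))) \<longrightarrow>
         (\<forall>t\<ge>0. (\<lambda>x'. \<Upsilon> t \<circ> x') ` intertwiners B \<theta> t = Fprime B \<rho> \<eta> \<xi> t
            \<and> (\<forall>x'\<in>intertwiners B \<theta> t. \<forall>y'\<in>intertwiners B \<theta> t.
                  adj (\<Upsilon> t \<circ> x') \<circ> (\<Upsilon> t \<circ> y') = adj x' \<circ> y')
            \<and> (\<forall>x'\<in>intertwiners B \<theta> t. \<forall>y'\<in>intertwiners B \<theta> t.
                  \<Upsilon> t \<circ> op_add x' y' = op_add (\<Upsilon> t \<circ> x') (\<Upsilon> t \<circ> y'))
            \<and> (\<forall>c. \<forall>x'\<in>intertwiners B \<theta> t.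
                  \<Upsilon> t \<circ> op_scale c x' = op_scale c (\<Upsilon> t \<circ> x'))
            \<and> (\<forall>b'\<in>commutant B. \<forall>x'\<in>intertwiners B \<theta> t.
                  \<Upsilon> t \<circ> (x' \<circ> b') = (\<Upsilon> t \<circ> x') \<circ> b'
                \<and> \<Upsilon> t \<circ> (b' \<circ> x') = thetaw B \<eta> t (\<xi> \<circ> b' \<circ> adj \<xi>) \<circ> (\<Upsilon> t \<circ> x')))
       \<and> (\<forall>s\<ge>0. \<forall>t\<ge>0. \<forall>x'\<in>intertwiners B \<theta> s. \<forall>y'\<in>intertwiners B \<theta> t.
            \<Upsilon> (s + t) \<circ> (x' \<circ> y')
              = thetaw B \<eta> t ((\<Upsilon> s \<circ> x') \<circ> adj \<xi>) \<circ> (\<Upsilon> t \<circ> y')))"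
proof -
  have Bbop: "bop x" if "x \<in> B" for x using vN that unfolding von_neumann_algebra_def by blast
  have Badj: "adj x \<in> B" if "x \<in> B" for x using vN that unfolding von_neumann_algebra_def by blast
  have idB: "id \<in> B"
  proof -
    have "id \<in> commutant (commutant B)" unfolding commutant_def by (simp add: bop_id)
    thus ?thesis using vN unfolding von_neumann_algebra_def by simp
  qed
  have thB: "\<theta> t b \<in> B" if "t \<ge> 0" "b \<in> B" for t b
    using E0 that unfolding E0_semigroup_def by blast
  have thadj: "\<theta> t (adj b) = adj (\<theta> t b)" if "t \<ge> 0" "b \<in> B" for t b
    using E0 that unfolding E0_semigroup_def star_hom_def by blast
  have sh: "star_hom B \<rho>" using dil by (simp add: right_dilation_def)
  have rho_bop: "bop (\<rho> x)" if "x \<in> B" for x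
    using sh that by (simp add: star_hom_def)
  have rho_adj: "\<rho> (adj x) = adj (\<rho> x)" if "x \<in> B" for x
    using sh that by (simp add: star_hom_def)
  have rho_comp: "\<rho> (x \<circ> y) = \<rho> x \<circ> \<rho> y" if "x \<in> B" "y \<in> B" for x y
    using sh that by (simp add: star_hom_def)
  have rho_id: "\<rho> id = id" using dil unfolding right_dilation_def by blast
  have I: "cinner (\<eta> t x h) (\<eta> t y k) = cinner h (\<rho> (adj x \<circ> y) k)"
    if "t \<ge> 0" "x \<in> B" "y \<in> B" for t x y h k
    using dil that unfolding right_dilation_def by blast
  have D: "closure (cspanC {\<eta> t x h | x h. x \<in> B}) = UNIV" if "t \<ge> 0" for t
    using dil that unfolding right_dilation_def by blast
  have L: "\<eta> t (\<theta> t b \<circ> x) h = \<rho> b (\<eta> t x h)" if "t \<ge> 0" "b \<in> B" "x \<in> B" for t b x h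
    using dil that unfolding right_dilation_def by blast
  have P: "\<eta> (s + t) (\<theta> t x \<circ> y) h = \<eta> s x (\<eta> t y h)"
    if "s \<ge> 0" "t \<ge> 0" "x \<in> B" "y \<in> B" for s t x y h
    using dil that unfolding right_dilation_def by blast
  have xi_bop: "bop \<xi>" using xi_in unfolding Eprime_def by blast
  have xi_pt: "\<rho> b (\<xi> g) = \<xi> (b g)" if "b \<in> B" for b g
  proof -
    have "\<rho> b \<circ> \<xi> = \<xi> \<circ> b" using xi_in that unfolding Eprime_def by blast
    thus ?thesis by (metis comp_apply)
  qed
  have xi_unit_pt: "adj \<xi> (\<xi> g) = g" for g using xi_unit by (metis comp_apply id_apply)
  define U where "U t = (\<lambda>g. \<eta> t id (\<xi> g))" for t
  have A: "\<eta> t id (\<rho> x h) = \<eta> t x h" if t0: "t \<ge> 0" and xB: "x \<in> B" for t x h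
  proof -
    define a where "a = \<eta> t id (\<rho> x h)"
    define b where "b = \<eta> t x h"
    define r where "r = cinner (\<rho> x h) (\<rho> x h)"
    have ax: "adj x \<circ> x \<in> B \<Longrightarrow> True" by simp
    have aa: "cinner a a = r" unfolding a_def r_def
      using I[OF t0 idB idB] by (simp add: adj_id rho_id)
    have ab: "cinner a b = r" unfolding a_def b_def r_def
      using I[OF t0 idB xB] by (simp add: adj_id)
    have rr: "cinner h (adj (\<rho> x) (\<rho> x h)) = r" unfolding r_def
      by (simp add: adj_prop[OF rho_bop[OF xB], symmetric])
    have ba: "cinner b a = r" unfolding a_def b_def
      using I[OF t0 xB idB, of h "\<rho> x h"] rr by (simp add: rho_adj[OF xB])
    have bb: "cinner b b = r" unfolding b_def
      using I[OF t0 xB xB, of h h] rr by (simp add: rho_comp[OF Badj[OF xB] xB] rho_adj[OF xB])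
    have "cinner (a - b) (a - b) = 0"
      by (simp add: cinner_diff_left cinner_diff_right aa ab ba bb)
    hence "a - b = 0" by (simp add: cinner_self_eq_0)
    thus ?thesis unfolding a_def b_def by simp
  qed
  have Uprop: "U t (x g) = \<eta> t x (\<xi> g)" if "t \<ge> 0" "x \<in> B" for t x g
    unfolding U_def using xi_pt[OF that(2)] A[OF that] by metis
  have Uiso: "cinner (U t g) (U t g') = cinner g g'" if t0: "t \<ge> 0" for t g g'
  proof -
    have "cinner (U t g) (U t g') = cinner (\<xi> g) (\<xi> g')"
      unfolding U_def using I[OF t0 idB idB] by (simp add: adj_id rho_id)
    also have "\<dots> = cinner g g'" by (simp add: adj_prop[OF xi_bop] xi_unit_pt)
    finally show ?thesis .
  qed
  have Ubop: "bop (U t)" if "t \<ge> 0" for t by (rule iso_bop) (rule Uiso[OF that])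
  have UstarU_pt: "adj (U t) (U t g) = g" if t0: "t \<ge> 0" for t g
    by (rule cinner_ext) (simp add: adj_prop[OF Ubop[OF t0], symmetric] Uiso[OF t0])
  have UstarU: "adj (U t) \<circ> U t = id" if t0: "t \<ge> 0" for t
    by (rule ext) (simp add: UstarU_pt[OF t0])
  have Ustar: "adj (U t) (\<eta> t x h) = x (adj \<xi> h)" if t0: "t \<ge> 0" and xB: "x \<in> B" for t x h
  proof (rule cinner_ext)
    fix g
    have "cinner g (adj (U t) (\<eta> t x h)) = cinner (U t g) (\<eta> t x h)"
      by (simp add: adj_prop[OF Ubop[OF t0]])
    also have "\<dots> = cinner (\<xi> g) (\<rho> x h)"
      unfolding U_def using I[OF t0 idB xB] by (simp add: adj_id)
    also have "\<dots> = cinner (adj (\<rho> x) (\<xi> g)) h" by (rule adj_prop2[OF rho_bop[OF xB]])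
    also have "\<dots> = cinner (\<xi> (adj x g)) h"
      by (simp add: rho_adj[OF xB, symmetric] xi_pt[OF Badj[OF xB]])
    also have "\<dots> = cinner (adj x g) (adj \<xi> h)" by (rule adj_prop[OF xi_bop])
    also have "\<dots> = cinner g (x (adj \<xi> h))" by (rule adj_prop2[OF Bbop[OF xB], symmetric])
    finally show "cinner g (adj (U t) (\<eta> t x h)) = cinner g (x (adj \<xi> h))" .
  qed
  have Pw: "thetaw B \<eta> t (\<xi> \<circ> adj \<xi>) = U t \<circ> adj (U t)" if t0: "t \<ge> 0" for t
  proof (rule thetaw_eq[where \<eta>=\<eta> and t=t and B=B, OF D[OF t0]])
    show "bop (U t \<circ> adj (U t))" by (intro bop_comp bop_adj Ubop t0)
    fix x h assume xB: "x \<in> B"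
    show "(U t \<circ> adj (U t)) (\<eta> t x h) = \<eta> t x ((\<xi> \<circ> adj \<xi>) h)"
      by (simp add: Ustar[OF t0 xB] Uprop[OF t0 xB])
  qed
  have Hs: "Hsub B \<eta> \<xi> t = range (U t)" if t0: "t \<ge> 0" for t
  proof -
    have "range (U t \<circ> adj (U t)) = range (U t)"
    proof
      show "range (U t \<circ> adj (U t)) \<subseteq> range (U t)" by auto
      show "range (U t) \<subseteq> range (U t \<circ> adj (U t))"
      proof
        fix y assume "y \<in> range (U t)"
        then obtain g where "y = U t g" by blast
        hence "y = (U t \<circ> adj (U t)) (U t g)" by (simp add: UstarU_pt[OF t0])
        thus "y \<in> range (U t \<circ> adj (U t))" by blast
      qed
    qed
    thus ?thesis unfolding Hsub_def Pw[OF t0] .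
  qed
  have Uuni: "unitary_onto (U t) (Hsub B \<eta> \<xi> t)" if t0: "t \<ge> 0" for t
    unfolding unitary_onto_def using Ubop[OF t0] UstarU[OF t0] Hs[OF t0] by blast
  have Uunique: "U' = U t" if t0: "t \<ge> 0" and h: "\<forall>x\<in>B. \<forall>g. U' (x g) = \<eta> t x (\<xi> g)" for t U'
  proof
    fix g
    have "U' (id g) = \<eta> t id (\<xi> g)" using h idB by blast
    thus "U' g = U t g" unfolding U_def by simp
  qed
  have part1: "\<forall>t\<ge>0. \<exists>!U. unitary_onto U (Hsub B \<eta> \<xi> t)
              \<and> (\<forall>x\<in>B. \<forall>g. U (x g) = \<eta> t x (\<xi> g))"
  proof (intro allI impI)
    fix t :: real assume t0: "t \<ge> 0"
    show "\<exists>!U. unitary_onto U (Hsub B \<eta> \<xi> t) \<and> (\<forall>x\<in>B. \<forall>g. U (x g) = \<eta> t x (\<xi> g))"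
    proof (rule ex1I[of _ "U t"])
      show "unitary_onto (U t) (Hsub B \<eta> \<xi> t) \<and> (\<forall>x\<in>B. \<forall>g. U t (x g) = \<eta> t x (\<xi> g))"
        using Uuni[OF t0] Uprop[OF t0] by blast
      fix U' assume "unitary_onto U' (Hsub B \<eta> \<xi> t) \<and> (\<forall>x\<in>B. \<forall>g. U' (x g) = \<eta> t x (\<xi> g))"
      thus "U' = U t" using Uunique[OF t0] by blast
    qed
  qed
  have rhoU: "\<rho> b (U t g) = U t (\<theta> t b g)" if t0: "t \<ge> 0" and bB: "b \<in> B" for t b g
  proof -
    have "\<rho> b (U t g) = \<eta> t (\<theta> t b \<circ> id) (\<xi> g)"
      unfolding U_def by (rule L[OF t0 bB idB, symmetric])
    also have "\<dots> = U t (\<theta> t b g)" using Uprop[OF t0 thB[OF t0 bB]] by simp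
    finally show ?thesis .
  qed
  have Ustar_rho: "adj (U t) (\<rho> b h) = \<theta> t b (adj (U t) h)" if t0: "t \<ge> 0" and bB: "b \<in> B" for t b h
  proof (rule cinner_ext)
    fix g
    have "cinner g (adj (U t) (\<rho> b h)) = cinner (U t g) (\<rho> b h)"
      by (simp add: adj_prop[OF Ubop[OF t0]])
    also have "\<dots> = cinner (adj (\<rho> b) (U t g)) h" by (rule adj_prop2[OF rho_bop[OF bB]])
    also have "\<dots> = cinner (U t (\<theta> t (adj b) g)) h"
      by (simp add: rho_adj[OF bB, symmetric] rhoU[OF t0 Badj[OF bB]])
    also have "\<dots> = cinner (\<theta> t (adj b) g) (adj (U t) h)" by (rule adj_prop[OF Ubop[OF t0]])
    also have "\<dots> = cinner (adj (\<theta> t b) g) (adj (U t) h)" by (simp add: thadj[OF t0 bB])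
    also have "\<dots> = cinner g (\<theta> t b (adj (U t) h))"
      by (rule adj_prop2[OF Bbop[OF thB[OF t0 bB]], symmetric])
    finally show "cinner g (adj (U t) (\<rho> b h)) = cinner g (\<theta> t b (adj (U t) h))" .
  qed
  have part2: "(\<forall>t\<ge>0. (\<lambda>x'. \<Upsilon> t \<circ> x') ` intertwiners B \<theta> t = Fprime B \<rho> \<eta> \<xi> t
            \<and> (\<forall>x'\<in>intertwiners B \<theta> t. \<forall>y'\<in>intertwiners B \<theta> t.
                  adj (\<Upsilon> t \<circ> x') \<circ> (\<Upsilon> t \<circ> y') = adj x' \<circ> y')
            \<and> (\<forall>x'\<in>intertwiners B \<theta> t. \<forall>y'\<in>intertwiners B \<theta> t.
                  \<Upsilon> t \<circ> op_add x' y' = op_add (\<Upsilon> t \<circ> x') (\<Upsilon> t \<circ> y'))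
            \<and> (\<forall>c. \<forall>x'\<in>intertwiners B \<theta> t.
                  \<Upsilon> t \<circ> op_scale c x' = op_scale c (\<Upsilon> t \<circ> x'))
            \<and> (\<forall>b'\<in>commutant B. \<forall>x'\<in>intertwiners B \<theta> t.
                  \<Upsilon> t \<circ> (x' \<circ> b') = (\<Upsilon> t \<circ> x') \<circ> b'
                \<and> \<Upsilon> t \<circ> (b' \<circ> x') = thetaw B \<eta> t (\<xi> \<circ> b' \<circ> adj \<xi>) \<circ> (\<Upsilon> t \<circ> x')))
       \<and> (\<forall>s\<ge>0. \<forall>t\<ge>0. \<forall>x'\<in>intertwiners B \<theta> s. \<forall>y'\<in>intertwiners B \<theta> t.
            \<Upsilon> (s + t) \<circ> (x' \<circ> y')
              = thetaw B \<eta> t ((\<Upsilon> s \<circ> x') \<circ> adj \<xi>) \<circ> (\<Upsilon> t \<circ> y'))"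
    if hyp: "\<forall>t\<ge>0. unitary_onto (\<Upsilon> t) (Hsub B \<eta> \<xi> t)
              \<and> (\<forall>x\<in>B. \<forall>g. \<Upsilon> t (x g) = \<eta> t x (\<xi> g))" for \<Upsilon>
  proof -
    have Ueq: "\<Upsilon> t = U t" if t0: "t \<ge> 0" for t
      using hyp t0 Uunique[OF t0] by blast
    have intD: "bop x'" "\<theta> t b (x' g) = x' (b g)"
      if "x' \<in> intertwiners B \<theta> t" "b \<in> B" for x' t b g
    proof -
      show "bop x'" using that unfolding intertwiners_def by blast
      have "\<theta> t b \<circ> x' = x' \<circ> b" using that unfolding intertwiners_def by blast
      thus "\<theta> t b (x' g) = x' (b g)" by (metis comp_apply)
    qed
    have A1: "\<forall>t\<ge>0. (\<lambda>x'. \<Upsilon> t \<circ> x') ` intertwiners B \<theta> t = Fprime B \<rho> \<eta> \<xi> t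
            \<and> (\<forall>x'\<in>intertwiners B \<theta> t. \<forall>y'\<in>intertwiners B \<theta> t.
                  adj (\<Upsilon> t \<circ> x') \<circ> (\<Upsilon> t \<circ> y') = adj x' \<circ> y')
            \<and> (\<forall>x'\<in>intertwiners B \<theta> t. \<forall>y'\<in>intertwiners B \<theta> t.
                  \<Upsilon> t \<circ> op_add x' y' = op_add (\<Upsilon> t \<circ> x') (\<Upsilon> t \<circ> y'))
            \<and> (\<forall>c. \<forall>x'\<in>intertwiners B \<theta> t.
                  \<Upsilon> t \<circ> op_scale c x' = op_scale c (\<Upsilon> t \<circ> x'))
            \<and> (\<forall>b'\<in>commutant B. \<forall>x'\<in>intertwiners B \<theta> t.
                  \<Upsilon> t \<circ> (x' \<circ> b') = (\<Upsilon> t \<circ> x') \<circ> b'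
                \<and> \<Upsilon> t \<circ> (b' \<circ> x') = thetaw B \<eta> t (\<xi> \<circ> b' \<circ> adj \<xi>) \<circ> (\<Upsilon> t \<circ> x'))"
    proof (intro allI impI)
      fix t :: real assume t0: "t \<ge> 0"
      note Ut = Ueq[OF t0]
      have img: "(\<lambda>x'. U t \<circ> x') ` intertwiners B \<theta> t = Fprime B \<rho> \<eta> \<xi> t"
      proof
        show "(\<lambda>x'. U t \<circ> x') ` intertwiners B \<theta> t \<subseteq> Fprime B \<rho> \<eta> \<xi> t"
        proof
          fix z assume "z \<in> (\<lambda>x'. U t \<circ> x') ` intertwiners B \<theta> t"
          then obtain x' where x': "x' \<in> intertwiners B \<theta> t" and z: "z = U t \<circ> x'" by blast
          have E: "U t \<circ> x' \<in> Eprime B \<rho>"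
            unfolding Eprime_def
          proof (intro CollectI conjI ballI)
            show "bop (U t \<circ> x')" by (intro bop_comp Ubop t0 intD(1)[OF x' idB])
            fix b assume bB: "b \<in> B"
            show "\<rho> b \<circ> (U t \<circ> x') = U t \<circ> x' \<circ> b"
              by (rule ext) (simp add: rhoU[OF t0 bB] intD(2)[OF x' bB])
          qed
          have "z = thetaw B \<eta> t (\<xi> \<circ> adj \<xi>) \<circ> (U t \<circ> x')"
            unfolding Pw[OF t0] z by (rule ext) (simp add: UstarU_pt[OF t0])
          thus "z \<in> Fprime B \<rho> \<eta> \<xi> t" unfolding Fprime_def using E by blast
        qed
        show "Fprime B \<rho> \<eta> \<xi> t \<subseteq> (\<lambda>x'. U t \<circ> x') ` intertwiners B \<theta> t"
        proof
          fix z assume "z \<in> Fprime B \<rho> \<eta> \<xi> t"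
          then obtain y' where y': "y' \<in> Eprime B \<rho>" and z: "z = thetaw B \<eta> t (\<xi> \<circ> adj \<xi>) \<circ> y'"
            unfolding Fprime_def by blast
          have ybop: "bop y'" using y' unfolding Eprime_def by blast
          have ypt: "\<rho> b (y' g) = y' (b g)" if "b \<in> B" for b g
          proof -
            have "\<rho> b \<circ> y' = y' \<circ> b" using y' that unfolding Eprime_def by blast
            thus ?thesis by (metis comp_apply)
          qed
          have I': "adj (U t) \<circ> y' \<in> intertwiners B \<theta> t"
            unfolding intertwiners_def
          proof (intro CollectI conjI ballI)
            show "bop (adj (U t) \<circ> y')" by (intro bop_comp bop_adj Ubop t0 ybop)
            fix b assume bB: "b \<in> B"
            show "\<theta> t b \<circ> (adj (U t) \<circ> y') = adj (U t) \<circ> y' \<circ> b"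
              by (rule ext) (simp add: Ustar_rho[OF t0 bB, symmetric] ypt[OF bB])
          qed
          have "z = U t \<circ> (adj (U t) \<circ> y')" unfolding z Pw[OF t0] by (simp add: comp_assoc)
          thus "z \<in> (\<lambda>x'. U t \<circ> x') ` intertwiners B \<theta> t" using I' by blast
        qed
      qed
      have ip: "adj (U t \<circ> x') \<circ> (U t \<circ> y') = adj x' \<circ> y'"
        if x': "x' \<in> intertwiners B \<theta> t" and y': "y' \<in> intertwiners B \<theta> t" for x' y'
      proof -
        have "adj (U t \<circ> x') = adj x' \<circ> adj (U t)"
          by (rule adj_comp[OF Ubop[OF t0] intD(1)[OF x' idB]])
        thus ?thesis by (simp add: fun_eq_iff UstarU_pt[OF t0])
      qed
      have addp: "U t \<circ> op_add x' y' = op_add (U t \<circ> x') (U t \<circ> y')" for x' y'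
        unfolding op_add_def by (rule ext) (simp add: bop_add[OF Ubop[OF t0]])
      have scp: "U t \<circ> op_scale c x' = op_scale c (U t \<circ> x')" for c x'
        unfolding op_scale_def by (rule ext) (simp add: bop_scaleC[OF Ubop[OF t0]])
      have comm: "U t \<circ> (b' \<circ> x') = thetaw B \<eta> t (\<xi> \<circ> b' \<circ> adj \<xi>) \<circ> (U t \<circ> x')"
        if b': "b' \<in> commutant B" for b' x'
      proof -
        have b'bop: "bop b'" using b' unfolding commutant_def by blast
        have b'c: "b' (x g) = x (b' g)" if "x \<in> B" for x g
        proof -
          have "b' \<circ> x = x \<circ> b'" using b' that unfolding commutant_def by blast
          thus ?thesis by (metis comp_apply)
        qed
        have "thetaw B \<eta> t (\<xi> \<circ> b' \<circ> adj \<xi>) = U t \<circ> b' \<circ> adj (U t)"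
        proof (rule thetaw_eq[where \<eta>=\<eta> and t=t and B=B, OF D[OF t0]])
          show "bop (U t \<circ> b' \<circ> adj (U t))" by (intro bop_comp bop_adj Ubop t0 b'bop)
          fix x h assume xB: "x \<in> B"
          show "(U t \<circ> b' \<circ> adj (U t)) (\<eta> t x h) = \<eta> t x ((\<xi> \<circ> b' \<circ> adj \<xi>) h)"
            by (simp add: Ustar[OF t0 xB] b'c[OF xB] Uprop[OF t0 xB])
        qed
        thus ?thesis by (simp add: fun_eq_iff UstarU_pt[OF t0])
      qed
      show "(\<lambda>x'. \<Upsilon> t \<circ> x') ` intertwiners B \<theta> t = Fprime B \<rho> \<eta> \<xi> t
            \<and> (\<forall>x'\<in>intertwiners B \<theta> t. \<forall>y'\<in>intertwiners B \<theta> t.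
                  adj (\<Upsilon> t \<circ> x') \<circ> (\<Upsilon> t \<circ> y') = adj x' \<circ> y')
            \<and> (\<forall>x'\<in>intertwiners B \<theta> t. \<forall>y'\<in>intertwiners B \<theta> t.
                  \<Upsilon> t \<circ> op_add x' y' = op_add (\<Upsilon> t \<circ> x') (\<Upsilon> t \<circ> y'))
            \<and> (\<forall>c. \<forall>x'\<in>intertwiners B \<theta> t.
                  \<Upsilon> t \<circ> op_scale c x' = op_scale c (\<Upsilon> t \<circ> x'))
            \<and> (\<forall>b'\<in>commutant B. \<forall>x'\<in>intertwiners B \<theta> t.
                  \<Upsilon> t \<circ> (x' \<circ> b') = (\<Upsilon> t \<circ> x') \<circ> b'
                \<and> \<Upsilon> t \<circ> (b' \<circ> x') = thetaw B \<eta> t (\<xi> \<circ> b' \<circ> adj \<xi>) \<circ> (\<Upsilon> t \<circ> x'))"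
        unfolding Ut
      proof (intro conjI ballI allI)
        show "(\<lambda>x'. U t \<circ> x') ` intertwiners B \<theta> t = Fprime B \<rho> \<eta> \<xi> t" by (rule img)
        fix x' assume x': "x' \<in> intertwiners B \<theta> t"
        { fix y' assume y': "y' \<in> intertwiners B \<theta> t"
          show "adj (U t \<circ> x') \<circ> (U t \<circ> y') = adj x' \<circ> y'" by (rule ip[OF x' y'])
          show "U t \<circ> op_add x' y' = op_add (U t \<circ> x') (U t \<circ> y')" by (rule addp) }
        { fix c show "U t \<circ> op_scale c x' = op_scale c (U t \<circ> x')" by (rule scp) }
        { fix b' assume b': "b' \<in> commutant B"
          show "U t \<circ> (x' \<circ> b') = (U t \<circ> x') \<circ> b'" by (simp add: comp_assoc)
          show "U t \<circ> (b' \<circ> x') = thetaw B \<eta> t (\<xi> \<circ> b' \<circ> adj \<xi>) \<circ> (U t \<circ> x')"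
            by (rule comm[OF b']) }
      qed
    qed
    have A2: "\<forall>s\<ge>0. \<forall>t\<ge>0. \<forall>x'\<in>intertwiners B \<theta> s. \<forall>y'\<in>intertwiners B \<theta> t.
            \<Upsilon> (s + t) \<circ> (x' \<circ> y')
              = thetaw B \<eta> t ((\<Upsilon> s \<circ> x') \<circ> adj \<xi>) \<circ> (\<Upsilon> t \<circ> y')"
    proof (intro allI impI ballI)
      fix s t :: real and x' y'
      assume s0: "s \<ge> 0" and t0: "t \<ge> 0" and x': "x' \<in> intertwiners B \<theta> s"
        and y': "y' \<in> intertwiners B \<theta> t"
      have st0: "s + t \<ge> 0" using s0 t0 by simp
      have "thetaw B \<eta> t ((U s \<circ> x') \<circ> adj \<xi>) = U (s + t) \<circ> x' \<circ> adj (U t)"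
      proof (rule thetaw_eq[where \<eta>=\<eta> and t=t and B=B, OF D[OF t0]])
        show "bop (U (s + t) \<circ> x' \<circ> adj (U t))"
          by (intro bop_comp bop_adj Ubop t0 st0 intD(1)[OF x' idB])
        fix x h assume xB: "x \<in> B"
        have "\<eta> t x ((U s \<circ> x' \<circ> adj \<xi>) h) = \<eta> t x (\<eta> s id (\<xi> (x' (adj \<xi> h))))"
          by (simp add: U_def)
        also have "\<dots> = \<eta> (t + s) (\<theta> s x \<circ> id) (\<xi> (x' (adj \<xi> h)))"
          by (rule P[OF t0 s0 xB idB, symmetric])
        also have "\<dots> = U (s + t) (\<theta> s x (x' (adj \<xi> h)))"
          using Uprop[OF st0 thB[OF s0 xB]] by (simp add: add.commute)
        also have "\<dots> = U (s + t) (x' (x (adj \<xi> h)))" by (simp add: intD(2)[OF x' xB])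
        finally show "(U (s + t) \<circ> x' \<circ> adj (U t)) (\<eta> t x h) = \<eta> t x ((U s \<circ> x' \<circ> adj \<xi>) h)"
          by (simp add: Ustar[OF t0 xB])
      qed
      thus "\<Upsilon> (s + t) \<circ> (x' \<circ> y') = thetaw B \<eta> t ((\<Upsilon> s \<circ> x') \<circ> adj \<xi>) \<circ> (\<Upsilon> t \<circ> y')"
        unfolding Ueq[OF s0] Ueq[OF t0] Ueq[OF st0] by (simp add: fun_eq_iff UstarU_pt[OF t0])
    qed
    show ?thesis using A1 A2 by blast
  qed
  show ?thesis using part1 part2 by blast
qed


end
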